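(* Let $T$, $S$, $A$ be closed Hermitian subspaces in $X^2$ with $D(T)=D(S)=:D\subset D(A)$ and $T=S+A$. Suppose that $T(0)^\perp$ reduces both $S$ and $A$. Then $$T_sx=S_sx+A_sx\quad\text{for all }x\in D,$$ and, setting $\hat S_s:=S\cap(T(0)^\perp)^2$ and $\hat A_s:=A\cap(T(0)^\perp)^2$, one has $$\hat S_s=S_s,\qquad \hat A_s\subset A_s,$$ and $\hat A_s$ is a closed Hermitian operator in $T(0)^\perp$ with $D\subset D(\hat A_s)$.
   Context: $X$ is a complex Hilbert space and $X^2=X\times X$ carries the inner product $\langle (x,f),(y,g)\rangle=\langle x,y\rangle+\langle f,g\rangle$. A subspace $T$ in $X^2$ means a linear subspace of $X^2$ (a linear relation); a linear operator in $X$ is identified with its graph. Notation: $D(T)=\{x:(x,f)\in T \text{ for some } f\}$, $T(x)=\{f:(x,f)\in T\}$. The adjoint is $T^*=\{(y,g)\in X^2:\langle g,x\rangle=\langle y,f\rangle \text{ for all }(x,f)\in T\}$; $T$ is Hermitian if $T\subset T^*$. For subspaces $S,A$ in $X^2$, $S+A=\{(x,f+g):(x,f)\in S,(x,g)\in A\}$. For a closed subspace $T$, set $T_\infty=\{(0,g)\in X^2:(0,g)\in T\}$ and $T_s=T\ominus T_\infty$ (orthogonal complement of $T_\infty$ in $T$), so $T=T_s\oplus T_\infty$; $T_s$ is the graph of a linear operator (the operator part of $T$) with $D(T_s)=D(T)$ and $R(T_s)\subset T(0)^\perp$. Reducing subspace: if $X_1$ is a closed subspace of $X$ and $P$ the orthogonal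 projection of $X$ onto $X_1$, then $X_1$ reduces the subspace $T$ if $\{(Px,Pf):(x,f)\in T\}\subset T$. *)

theory Defs
  imports "HOL-Analysis.Analysis"
begin

text \<open>HOL-Analysis only has real inner product spaces, so we
introduce a class: a real Banach space with a compatible complex scalar multiplication
and a complex inner product (linear in the first, conjugate linear in the second argument)
inducing the norm.  The topology of the type is the norm topology.\<close>

class chilbert = real_normed_vector + complete_space +
  fixes scaleC :: "complex \<Rightarrow> 'a \<Rightarrow> 'a" (infixr \<open>*\<^sub>C\<close> 75)
    and cinner :: "'a \<Rightarrow> 'a \<Rightarrow> complex"
  assumes scaleC_add_right: "a *\<^sub>C (x + y) = a *\<^sub>C x + a *\<^sub>C y"
    and scaleC_add_left: "(a + b) *\<^sub>C x = a *\<^sub>C x + b *\<^sub>C x"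
    and scaleC_scaleC: "a *\<^sub>C (b *\<^sub>C x) = (a * b) *\<^sub>C x"
    and scaleC_one: "1 *\<^sub>C x = x"
    and scaleR_scaleC: "scaleR r x = complex_of_real r *\<^sub>C x"
    and cinner_commute: "cinner x y = cnj (cinner y x)"
    and cinner_add_left: "cinner (x + y) z = cinner x z + cinner y z"
    and cinner_scaleC_left: "cinner (a *\<^sub>C x) y = a * cinner x y"
    and cinner_norm: "cinner x x = complex_of_real ((norm x)\<^sup>2)"

definition lin_subspace :: "('a::chilbert \<times> 'a) set \<Rightarrow> bool" where
  "lin_subspace T \<longleftrightarrow> (0, 0) \<in> T \<and>
     (\<forall>x f y g. (x, f) \<in> T \<longrightarrow> (y, g) \<in> T \<longrightarrow> (x + y, f + g) \<in> T) \<and>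
     (\<forall>c x f. (x, f) \<in> T \<longrightarrow> (c *\<^sub>C x, c *\<^sub>C f) \<in> T)"

definition cinner2 :: "('a::chilbert \<times> 'a) \<Rightarrow> ('a \<times> 'a) \<Rightarrow> complex" where
  "cinner2 p q = cinner (fst p) (fst q) + cinner (snd p) (snd q)"

definition dom :: "('a::chilbert \<times> 'a) set \<Rightarrow> 'a set" where
  "dom T = {x. \<exists>f. (x, f) \<in> T}"

definition img :: "('a::chilbert \<times> 'a) set \<Rightarrow> 'a \<Rightarrow> 'a set" where
  "img T x = {f. (x, f) \<in> T}"

definition adjoint :: "('a::chilbert \<times> 'a) set \<Rightarrow> ('a \<times> 'a) set" where
  "adjoint T = {(y, g). \<forall>x f. (x, f) \<in> T \<longrightarrow> cinner g x = cinner y f}"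

definition hermitian :: "('a::chilbert \<times> 'a) set \<Rightarrow> bool" where
  "hermitian T \<longleftrightarrow> T \<subseteq> adjoint T"

definition rel_plus :: "('a::chilbert \<times> 'a) set \<Rightarrow> ('a \<times> 'a) set \<Rightarrow> ('a \<times> 'a) set" where
  "rel_plus S A = {(x, f + g) | x f g. (x, f) \<in> S \<and> (x, g) \<in> A}"

definition orth :: "'a::chilbert set \<Rightarrow> 'a set" where
  "orth M = {y. \<forall>x\<in>M. cinner x y = 0}"

definition orth_in :: "('a::chilbert \<times> 'a) set \<Rightarrow> ('a \<times> 'a) set \<Rightarrow> ('a \<times> 'a) set" where
  "orth_in T N = {p \<in> T. \<forall>q\<in>N. cinner2 p q = 0}"

definition T_inf :: "('a::chilbert \<times> 'a) set \<Rightarrow> ('a \<times> 'a) set" where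
  "T_inf T = {(0, g) | g. (0, g) \<in> T}"

definition T_s :: "('a::chilbert \<times> 'a) set \<Rightarrow> ('a \<times> 'a) set" where
  "T_s T = orth_in T (T_inf T)"

definition orth_proj :: "'a::chilbert set \<Rightarrow> 'a \<Rightarrow> 'a" where
  "orth_proj M x = (THE y. y \<in> M \<and> (\<forall>z\<in>M. cinner (x - y) z = 0))"

definition closed_csubspace :: "'a::chilbert set \<Rightarrow> bool" where
  "closed_csubspace M \<longleftrightarrow> closed M \<and> 0 \<in> M \<and> (\<forall>x\<in>M. \<forall>y\<in>M. x + y \<in> M) \<and>
     (\<forall>c. \<forall>x\<in>M. c *\<^sub>C x \<in> M)"

definition reduces :: "'a::chilbert set \<Rightarrow> ('a \<times> 'a) set \<Rightarrow> bool" where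
  "reduces X1 T \<longleftrightarrow> closed_csubspace X1 \<and>
     (\<forall>x f. (x, f) \<in> T \<longrightarrow> (orth_proj X1 x, orth_proj X1 f) \<in> T)"

definition is_operator :: "('a::chilbert \<times> 'a) set \<Rightarrow> bool" where
  "is_operator T \<longleftrightarrow> (\<forall>x f g. (x, f) \<in> T \<longrightarrow> (x, g) \<in> T \<longrightarrow> f = g)"

end

theory Submission
  imports Defs
begin

lemma cinner_zero_left[simp]: "cinner (0::'a::chilbert) y = 0"
proof -
  have "cinner (0+0::'a) y = cinner 0 y + cinner 0 y" by (rule cinner_add_left)
  then show ?thesis by simp
qed

lemma cinner_minus_left: "cinner (- x::'a::chilbert) y = - cinner x y"
proof -
  have "cinner (x + - x) y = cinner x y + cinner (-x) y" by (rule cinner_add_left)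
  then show ?thesis by (simp add: eq_neg_iff_add_eq_0 add.commute)
qed

lemma cinner_diff_left: "cinner (x - z::'a::chilbert) y = cinner x y - cinner z y"
  using cinner_add_left[of x "-z" y] by (simp add: cinner_minus_left)

lemma cinner_zero_right[simp]: "cinner x (0::'a::chilbert) = 0"
  by (subst cinner_commute) simp

lemma cinner_diff_right: "cinner x (y - z::'a::chilbert) = cinner x y - cinner x z"
  by (subst (1 2 3) cinner_commute) (simp add: cinner_diff_left)

lemma cinner_add_right: "cinner x (y + z::'a::chilbert) = cinner x y + cinner x z"
  by (subst (1 2 3) cinner_commute) (simp add: cinner_add_left)

lemma cinner_scaleC_right: "cinner x (a *\<^sub>C y::'a::chilbert) = cnj a * cinner x y"
  by (subst (1 2) cinner_commute) (simp add: cinner_scaleC_left)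

lemma scaleC_minus1: "(-1) *\<^sub>C (x::'a::chilbert) = - x"
  using scaleR_scaleC[of "-1" x] by simp

lemma cinner_self_eq0: "cinner x x = 0 \<Longrightarrow> (x::'a::chilbert) = 0"
  using cinner_norm[of x] by simp

lemma norm_sq_cinner: "(norm (x::'a::chilbert))\<^sup>2 = Re (cinner x x)"
  using cinner_norm[of x] by simp

lemma norm_diff_sq: "(norm (x - y::'a::chilbert))\<^sup>2 = (norm x)\<^sup>2 + (norm y)\<^sup>2 - 2 * Re (cinner x y)"
proof -
  have "cinner (x - y) (x - y) = cinner x x - cinner x y - cnj (cinner x y) + cinner y y"
    by (simp add: cinner_diff_left cinner_diff_right cinner_commute[of y x])
  then show ?thesis by (simp add: norm_sq_cinner)
qed

lemma norm_add_sq: "(norm (x + y::'a::chilbert))\<^sup>2 = (norm x)\<^sup>2 + (norm y)\<^sup>2 + 2 * Re (cinner x y)"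
proof -
  have "Re (cinner x (-y)) = - Re (cinner x y)"
    using cinner_diff_right[of x 0 y] by simp
  then show ?thesis using norm_diff_sq[of x "-y"] by simp
qed

lemma parallelogram: "(norm (x + y::'a::chilbert))\<^sup>2 + (norm (x - y))\<^sup>2 = 2*(norm x)\<^sup>2 + 2*(norm y)\<^sup>2"
  using norm_diff_sq[of x y] norm_add_sq[of x y] by simp

lemma csub_diff: "closed_csubspace M \<Longrightarrow> x \<in> M \<Longrightarrow> y \<in> M \<Longrightarrow> x - (y::'a::chilbert) \<in> M"
  unfolding closed_csubspace_def using scaleC_minus1[of y]
  by (metis diff_conv_add_uminus)

lemma csub_scaleR: "closed_csubspace M \<Longrightarrow> x \<in> M \<Longrightarrow> scaleR r (x::'a::chilbert) \<in> M"
  unfolding closed_csubspace_def by (simp add: scaleR_scaleC)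

lemma proj_exists:
  fixes M :: "'a::chilbert set" and f :: 'a
  assumes cs: "closed_csubspace M"
  shows "\<exists>y\<in>M. \<forall>z\<in>M. cinner (f - y) z = 0"
proof -
  have add: "x + y \<in> M" if "x \<in> M" "y \<in> M" for x y using cs that unfolding closed_csubspace_def by blast
  have scC: "c *\<^sub>C x \<in> M" if "x \<in> M" for c x using cs that unfolding closed_csubspace_def by blast
  have z0: "0 \<in> M" and clM: "closed M" using cs unfolding closed_csubspace_def by auto
  define V where "V = (\<lambda>m. (norm (f - m))\<^sup>2) ` M"
  define d where "d = Inf V"
  have Vne: "V \<noteq> {}" using z0 V_def by blast
  have bdd: "bdd_below V" unfolding V_def by (rule bdd_belowI[of _ 0]) auto
  have le: "d \<le> (norm (f - m))\<^sup>2" if "m \<in> M" for m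
    unfolding d_def using bdd that V_def by (auto intro: cInf_lower)
  have "\<exists>m\<in>M. (norm (f - m))\<^sup>2 < d + 1 / real (Suc n)" for n
  proof -
    have "Inf V < d + 1 / real (Suc n)" unfolding d_def by simp
    then show ?thesis using cInf_less_iff[OF Vne bdd] V_def by auto
  qed
  then obtain mm where mm: "\<And>n. mm n \<in> M" "\<And>n. (norm (f - mm n))\<^sup>2 < d + 1 / real (Suc n)"
    by metis
  have key: "(norm (mm n - mm k))\<^sup>2 \<le> 2 / real (Suc n) + 2 / real (Suc k)" for n k
  proof -
    define mid where "mid = scaleR (1/2) (mm n + mm k)"
    have midM: "mid \<in> M" unfolding mid_def by (intro csub_scaleR[OF cs] add mm)
    have "(f - mm n) + (f - mm k) = scaleR 2 (f - mid)"
      unfolding mid_def by (simp add: algebra_simps scaleR_2)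
    then have "(norm ((f - mm n) + (f - mm k)))\<^sup>2 = 4 * (norm (f - mid))\<^sup>2"
      by (simp add: power2_eq_square)
    moreover have "(f - mm n) - (f - mm k) = mm k - mm n" by simp
    moreover have "norm (mm k - mm n) = norm (mm n - mm k)" by (rule norm_minus_commute)
    ultimately have "4 * (norm (f - mid))\<^sup>2 + (norm (mm n - mm k))\<^sup>2 = 2 * (norm (f - mm n))\<^sup>2 + 2 * (norm (f - mm k))\<^sup>2"
      using parallelogram[of "f - mm n" "f - mm k"] by simp
    then show ?thesis using le[OF midM] mm(2)[of n] mm(2)[of k] by linarith
  qed
  have "Cauchy mm"
  proof (rule CauchyI)
    fix e :: real assume e: "0 < e"
    obtain N :: nat where N: "4 / e\<^sup>2 < real N" using reals_Archimedean2 by blast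
    have "4 / real (Suc N) < e\<^sup>2"
    proof -
      have "4 < e\<^sup>2 * real N" using N e by (simp add: field_simps)
      also have "\<dots> \<le> e\<^sup>2 * real (Suc N)" using e by simp
      finally show ?thesis by (simp add: field_simps)
    qed
    show "\<exists>N. \<forall>m\<ge>N. \<forall>n\<ge>N. norm (mm m - mm n) < e"
    proof (intro exI allI impI)
      fix m n assume mn: "N \<le> m" "N \<le> n"
      have "2 / real (Suc m) \<le> 2 / real (Suc N)" using mn by (simp add: frac_le)
      moreover have "2 / real (Suc n) \<le> 2 / real (Suc N)" using mn by (simp add: frac_le)
      ultimately have "(norm (mm m - mm n))\<^sup>2 < e\<^sup>2"
        using key[of m n] \<open>4 / real (Suc N) < e\<^sup>2\<close> by linarith
      then show "norm (mm m - mm n) < e" using e power2_less_imp_less less_imp_le by blast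
    qed
  qed
  then obtain y where y: "mm \<longlonglongrightarrow> y" using Cauchy_convergent_iff convergent_def by blast
  have yM: "y \<in> M" using clM y mm(1) closed_sequentially by blast
  have "(\<lambda>n. (norm (f - mm n))\<^sup>2) \<longlonglongrightarrow> (norm (f - y))\<^sup>2"
    by (intro tendsto_intros y)
  moreover have "(\<lambda>n. d + 1 / real (Suc n)) \<longlonglongrightarrow> d"
    using tendsto_add[OF tendsto_const LIMSEQ_inverse_real_of_nat, of d] by (simp add: divide_inverse)
  ultimately have yd: "(norm (f - y))\<^sup>2 \<le> d"
    by (rule LIMSEQ_le) (use mm(2) less_imp_le in blast)
  show ?thesis
  proof (intro bexI[OF _ yM] ballI)
    fix z assume zM: "z \<in> M"
    define w where "w = f - y"
    define c where "c = cinner w z"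
    define s :: real where "s = 1 / ((norm z)\<^sup>2 + 1)"
    define a where "a = complex_of_real s * c"
    have pz: "0 < (norm z)\<^sup>2 + 1" by (simp add: add_nonneg_pos)
    have s0: "0 < s" unfolding s_def using pz by simp
    have snz: "s * (norm z)\<^sup>2 < 1" unfolding s_def using pz by (simp add: field_simps)
    have "y + a *\<^sub>C z \<in> M" by (intro add yM scC zM)
    then have "d \<le> (norm (f - (y + a *\<^sub>C z)))\<^sup>2" by (rule le)
    also have "f - (y + a *\<^sub>C z) = w - a *\<^sub>C z" unfolding w_def by simp
    also have "(norm (w - a *\<^sub>C z))\<^sup>2 = (norm w)\<^sup>2 + (norm (a *\<^sub>C z))\<^sup>2 - 2 * Re (cinner w (a *\<^sub>C z))"
      by (rule norm_diff_sq)
    also have "(norm (a *\<^sub>C z))\<^sup>2 = s\<^sup>2 * (cmod c)\<^sup>2 * (norm z)\<^sup>2"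
    proof -
      have e1: "cinner (a *\<^sub>C z) (a *\<^sub>C z) = (a * cnj a) * cinner z z"
        by (simp add: cinner_scaleC_left cinner_scaleC_right)
      have e2: "a * cnj a = complex_of_real ((cmod a)\<^sup>2)" by (metis complex_norm_square of_real_power)
      have e3: "cmod a = s * cmod c" unfolding a_def using s0 by (simp add: norm_mult)
      have "(norm (a *\<^sub>C z))\<^sup>2 = Re (complex_of_real ((cmod a)\<^sup>2) * complex_of_real ((norm z)\<^sup>2))"
        using e1 e2 norm_sq_cinner[of "a *\<^sub>C z"] cinner_norm[of z] by simp
      also have "\<dots> = (cmod a)\<^sup>2 * (norm z)\<^sup>2" by (simp only: of_real_mult[symmetric] Re_complex_of_real)
      finally show ?thesis using e3 by (simp add: power_mult_distrib)
    qed
    also have "Re (cinner w (a *\<^sub>C z)) = s * (cmod c)\<^sup>2"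
    proof -
      have "cinner w (a *\<^sub>C z) = complex_of_real s * (cnj c * c)"
        by (simp add: cinner_scaleC_right a_def c_def)
      also have "cnj c * c = complex_of_real ((cmod c)\<^sup>2)" by (metis complex_norm_square of_real_power mult.commute)
      finally have "cinner w (a *\<^sub>C z) = complex_of_real (s * (cmod c)\<^sup>2)" by (simp only: of_real_mult)
      then show ?thesis by (simp only: Re_complex_of_real)
    qed
    finally have "d \<le> (norm w)\<^sup>2 + s\<^sup>2 * (cmod c)\<^sup>2 * (norm z)\<^sup>2 - 2 * (s * (cmod c)\<^sup>2)" .
    with yd have "0 \<le> s * (cmod c)\<^sup>2 * (s * (norm z)\<^sup>2 - 2)"
      unfolding w_def by (simp add: algebra_simps power2_eq_square)
    moreover have "s * (norm z)\<^sup>2 - 2 < 0" using snz by simp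
    ultimately have "s * (cmod c)\<^sup>2 \<le> 0" using zero_le_mult_iff[of "s * (cmod c)\<^sup>2" "s * (norm z)\<^sup>2 - 2"] by linarith
    then have "(cmod c)\<^sup>2 = 0" using s0 by (simp add: mult_le_0_iff)
    then show "cinner (f - y) z = 0" unfolding c_def w_def by simp
  qed
qed

lemma proj_uniq:
  assumes cs: "closed_csubspace M" and "y1 \<in> M" "\<forall>z\<in>M. cinner (f - y1) z = 0"
    and "y2 \<in> M" "\<forall>z\<in>M. cinner (f - y2) z = 0"
  shows "y1 = (y2::'a::chilbert)"
proof -
  have d: "y2 - y1 \<in> M" using csub_diff[OF cs] assms by blast
  have "cinner (f - y1) (y2 - y1) - cinner (f - y2) (y2 - y1) = 0" using assms d by simp
  then have "cinner (y2 - y1) (y2 - y1) = 0" by (simp add: cinner_diff_left)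
  then show ?thesis using cinner_self_eq0 by force
qed

lemma proj_props:
  assumes cs: "closed_csubspace M"
  shows "orth_proj M f \<in> M \<and> (\<forall>z\<in>M. cinner (f - orth_proj M f) z = 0)"
proof -
  have "\<exists>!y. y \<in> M \<and> (\<forall>z\<in>M. cinner (f - y) z = 0)"
    using proj_exists[OF cs, of f] proj_uniq[OF cs] by blast
  then show ?thesis unfolding orth_proj_def by (rule theI')
qed

lemma proj_id:
  assumes cs: "closed_csubspace M" and x: "x \<in> M"
  shows "orth_proj M x = x"
  using proj_uniq[OF cs proj_props[OF cs, THEN conjunct1] proj_props[OF cs, THEN conjunct2] x, of x] by simp

lemma lin_diff: "lin_subspace T \<Longrightarrow> (x,f) \<in> T \<Longrightarrow> (y,g) \<in> T \<Longrightarrow> (x - y, f - g) \<in> T"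
  unfolding lin_subspace_def using scaleC_minus1
  by (metis diff_conv_add_uminus)

lemma Ts_iff: "(x,f) \<in> T_s T \<longleftrightarrow> (x,f) \<in> T \<and> f \<in> orth (img T 0)"
proof -
  have "(\<forall>g. (0,g) \<in> T \<longrightarrow> cinner f g = 0) \<longleftrightarrow> (\<forall>g. (0,g) \<in> T \<longrightarrow> cinner g f = 0)"
    by (metis cinner_commute complex_cnj_zero)
  then show ?thesis
    unfolding T_s_def orth_in_def T_inf_def orth_def img_def cinner2_def by auto
qed

lemma red_step:
  assumes "reduces M U" "lin_subspace U" "(x,f) \<in> U" "x \<in> M"
  shows "(x, orth_proj M f) \<in> U" "orth_proj M f \<in> M" "f - orth_proj M f \<in> img U 0"
proof -
  have cs: "closed_csubspace M" using assms(1) unfolding reduces_def by blast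
  have "(orth_proj M x, orth_proj M f) \<in> U" using assms(1,3) unfolding reduces_def by blast
  then show 1: "(x, orth_proj M f) \<in> U" using proj_id[OF cs assms(4)] by simp
  show "orth_proj M f \<in> M" using proj_props[OF cs] by blast
  show "f - orth_proj M f \<in> img U 0" using lin_diff[OF assms(2) assms(3) 1] unfolding img_def by simp
qed

lemma into_M:
  assumes "reduces M U" "lin_subspace U" "(x,f) \<in> T_s U" "x \<in> M" "img U 0 \<subseteq> N" "M = orth N"
  shows "f \<in> M"
proof -
  have fU: "(x,f) \<in> U" and fo: "f \<in> orth (img U 0)" using assms(3) Ts_iff by auto
  define h where "h = f - orth_proj M f"
  have hU: "h \<in> img U 0" and pM: "orth_proj M f \<in> M" using red_step[OF assms(1,2) fU assms(4)] h_def by auto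
  have "cinner h f = 0" using fo hU unfolding orth_def by blast
  moreover have "cinner h (orth_proj M f) = 0" using pM hU assms(5,6) unfolding orth_def by blast
  ultimately have "cinner h h = 0" unfolding h_def by (simp add: cinner_diff_right)
  then have "h = 0" by (rule cinner_self_eq0)
  then show ?thesis using pM h_def by simp
qed

theorem theorem3p3:
  fixes T S A :: "('a::chilbert \<times> 'a) set" and D :: "'a set"
  assumes "lin_subspace T" "closed T" "hermitian T"
    and "lin_subspace S" "closed S" "hermitian S"
    and "lin_subspace A" "closed A" "hermitian A"
    and "dom T = D" "dom S = D" "D \<subseteq> dom A"
    and "T = rel_plus S A"
    and "reduces (orth (img T 0)) S" "reduces (orth (img T 0)) A"
  shows "(\<forall>x\<in>D. img (T_s T) x = {g + h | g h. g \<in> img (T_s S) x \<and> h \<in> img (T_s A) x})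
    \<and> S \<inter> (orth (img T 0) \<times> orth (img T 0)) = T_s S
    \<and> A \<inter> (orth (img T 0) \<times> orth (img T 0)) \<subseteq> T_s A
    \<and> (let M = orth (img T 0); Ah = A \<inter> (M \<times> M) in
         lin_subspace Ah \<and> closed Ah \<and> hermitian Ah \<and> is_operator Ah \<and> Ah \<subseteq> M \<times> M
         \<and> D \<subseteq> dom Ah)"
proof -
  define N where "N = img T 0"
  define M where "M = orth N"
  define P where "P = orth_proj M"
  have rS: "reduces M S" and rA: "reduces M A" using assms(14,15) M_def N_def by auto
  have cs: "closed_csubspace M" using rS unfolding reduces_def by blast
  have Madd: "a + b \<in> M" if "a \<in> M" "b \<in> M" for a b using cs that unfolding closed_csubspace_def by blast
  have Mdiff: "a - b \<in> M" if "a \<in> M" "b \<in> M" for a b using csub_diff[OF cs] that by blast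
  have MN0: "a = 0" if "a \<in> M" "a \<in> N" for a
    using that cinner_self_eq0[of a] unfolding M_def orth_def by blast
  have MNperp: "cinner g a = 0" if "a \<in> M" "g \<in> N" for a g
    using that unfolding M_def orth_def by blast
  have plus: "(x, f + g) \<in> T" if "(x,f) \<in> S" "(x,g) \<in> A" for x f g
    using that assms(13) unfolding rel_plus_def by blast
  have A00: "(0,0) \<in> A" "(0,0) \<in> S" using assms(4,7) unfolding lin_subspace_def by auto
  have SN: "img S 0 \<subseteq> N" using plus[of 0 _ 0] A00 unfolding N_def img_def by auto
  have AN: "img A 0 \<subseteq> N" using plus[of 0 0] A00 unfolding N_def img_def by force
  have DM: "x \<in> M" if xD0: "x \<in> D" for x
  proof -
    obtain f where xf: "(x,f) \<in> T" using xD0 assms(10) unfolding dom_def by blast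
    have "cinner g x = 0" if "g \<in> N" for g
    proof -
      have "(0,g) \<in> adjoint T" using that assms(3) unfolding N_def img_def hermitian_def by blast
      then show ?thesis using xf unfolding adjoint_def by auto
    qed
    then show ?thesis unfolding M_def orth_def by blast
  qed
  have orthS: "f \<in> orth (img S 0)" if "f \<in> M" for f
    using that SN MNperp unfolding orth_def by blast
  have orthA: "f \<in> orth (img A 0)" if "f \<in> M" for f
    using that AN MNperp unfolding orth_def by blast
  have P1: "\<forall>x\<in>D. img (T_s T) x = {g + h | g h. g \<in> img (T_s S) x \<and> h \<in> img (T_s A) x}"
  proof
    fix x assume xD: "x \<in> D"
    have xM: "x \<in> M" using DM xD .
    show "img (T_s T) x = {g + h | g h. g \<in> img (T_s S) x \<and> h \<in> img (T_s A) x}"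
    proof (rule set_eqI, rule iffI)
      fix k assume "k \<in> img (T_s T) x"
      then have xk: "(x,k) \<in> T" and kM: "k \<in> M" using Ts_iff[of x k T] unfolding img_def M_def N_def by auto
      obtain f g where fS: "(x,f) \<in> S" and gA: "(x,g) \<in> A" and kfg: "k = f + g"
        using xk assms(13) unfolding rel_plus_def by blast
      note s1 = red_step[OF rS assms(4) fS xM] and a1 = red_step[OF rA assms(7) gA xM]
      have "(x, orth_proj M f + orth_proj M g) \<in> T" using plus s1(1) a1(1) by blast
      then have "(x - x, k - (orth_proj M f + orth_proj M g)) \<in> T" using lin_diff[OF assms(1) xk] by blast
      then have "k - (orth_proj M f + orth_proj M g) \<in> N" unfolding N_def img_def by simp
      moreover have "k - (orth_proj M f + orth_proj M g) \<in> M" using kM s1(2) a1(2) Madd Mdiff by blast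
      ultimately have ke: "k = orth_proj M f + orth_proj M g" using MN0 by force
      have "orth_proj M f \<in> img (T_s S) x" using Ts_iff s1(1) orthS[OF s1(2)] unfolding img_def by blast
      moreover have "orth_proj M g \<in> img (T_s A) x" using Ts_iff a1(1) orthA[OF a1(2)] unfolding img_def by blast
      ultimately show "k \<in> {g + h | g h. g \<in> img (T_s S) x \<and> h \<in> img (T_s A) x}" using ke by blast
    next
      fix k assume "k \<in> {g + h | g h. g \<in> img (T_s S) x \<and> h \<in> img (T_s A) x}"
      then obtain g h where k: "k = g + h" and g: "(x,g) \<in> T_s S" and h: "(x,h) \<in> T_s A"
        unfolding img_def by blast
      have gM: "g \<in> M" using into_M[OF rS assms(4) g xM SN M_def] .
      have hM: "h \<in> M" using into_M[OF rA assms(7) h xM AN M_def] .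
      have "(x, g + h) \<in> T" using plus g h Ts_iff by blast
      then show "k \<in> img (T_s T) x" using Ts_iff Madd[OF gM hM] k unfolding img_def M_def N_def by blast
    qed
  qed
  have P2: "S \<inter> (M \<times> M) = T_s S"
  proof (rule set_eqI, rule iffI)
    fix p assume "p \<in> S \<inter> (M \<times> M)"
    then show "p \<in> T_s S" using Ts_iff orthS by (cases p) auto
  next
    fix p assume p: "p \<in> T_s S"
    obtain x f where pe: "p = (x,f)" by (cases p)
    have "(x,f) \<in> S" using p pe Ts_iff by blast
    then have xM: "x \<in> M" using DM assms(11) unfolding dom_def by blast
    have "f \<in> M" using into_M[OF rS assms(4) _ xM SN M_def] p pe by blast
    then show "p \<in> S \<inter> (M \<times> M)" using p pe xM Ts_iff by blast
  qed
  have P3: "A \<inter> (M \<times> M) \<subseteq> T_s A"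
  proof
    fix p assume "p \<in> A \<inter> (M \<times> M)"
    then show "p \<in> T_s A" using Ts_iff orthA by (cases p) auto
  qed
  define Ah where "Ah = A \<inter> (M \<times> M)"
  have L: "lin_subspace Ah"
    using assms(7) cs unfolding lin_subspace_def Ah_def closed_csubspace_def by auto
  have C: "closed Ah" unfolding Ah_def
    using assms(8) cs unfolding closed_csubspace_def by (intro closed_Int closed_Times) auto
  have H: "hermitian Ah" using assms(9) unfolding hermitian_def adjoint_def Ah_def by blast
  have O: "is_operator Ah" unfolding is_operator_def
  proof (intro allI impI)
    fix x f g assume f: "(x,f) \<in> Ah" and g: "(x,g) \<in> Ah"
    have "(x - x, f - g) \<in> A" using lin_diff[OF assms(7)] f g unfolding Ah_def by blast
    then have "f - g \<in> N" using AN unfolding img_def by auto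
    moreover have "f - g \<in> M" using f g Mdiff unfolding Ah_def by blast
    ultimately show "f = g" using MN0 by force
  qed
  have Dd: "D \<subseteq> dom Ah"
  proof
    fix x assume xD: "x \<in> D"
    then obtain g where gA: "(x,g) \<in> A" using assms(12) unfolding dom_def by blast
    have xM: "x \<in> M" using DM xD .
    note a1 = red_step[OF rA assms(7) gA xM]
    show "x \<in> dom Ah" using a1(1,2) xM unfolding dom_def Ah_def by blast
  qed
  show ?thesis using P1 P2 P3 L C H O Dd unfolding M_def N_def Ah_def Let_def by auto
qed

end
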